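(* Assume $\operatorname{rk}L=2$ and $\omega$ non-degenerate. Let $u\in L$ be primitive and let $W,W'\in\mathcal Q[L^*]$ be Laurent polynomials with $W=\mu_u^*(W')$. Then $W\in\mathbb Z[L^*]$ if and only if $W'\in\mathbb Z[L^*]$.
   Context: $L$ is a lattice with skew-symmetric integral bilinear form $\omega$, $L^*=\mathrm{Hom}(L,\mathbb Z)$, $(\cdot,\cdot)$ the canonical pairing. $\mathcal Q=\mathbb Q(e^{2\pi i\mathbb Q})$ is $\mathbb Q$ with all roots of unity adjoined; $\mathcal Q[L^*]$ (resp. $\mathbb Z[L^*]$) is the group algebra of $L^*$ over $\mathcal Q$ (resp. $\mathbb Z$) with monomials $X^m$, and $\mathbb K_L$ is the fraction field of $\mathcal Q[L^*]$. For $v\in L$, $\mu_v^*$ is the $\mathcal Q$-algebra automorphism of $\mathbb K_L$ with $\mu_v^*(X^m)=X^m(1+X^{\omega(\cdot,v)})^{-(m,v)}$, where $\omega(\cdot,v)\in L^*$ is $w\mapsto\omega(w,v)$. A vector is primitive if nonzero and not a multiple $kw$, $k>1$. *)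

theory Defs
  imports Complex_Main "HOL-Library.Poly_Mapping" "HOL-Library.Product_Plus"
begin

text \<open>The lattice L of rank 2 is identified with int \<times> int (choice of a basis);
  L^* = Hom(L,Z) is identified with int \<times> int via the dual basis.\<close>

definition pairing :: "int \<times> int \<Rightarrow> int \<times> int \<Rightarrow> int" where
  "pairing m v = fst m * fst v + snd m * snd v"

definition skew_bilinear :: "(int \<times> int \<Rightarrow> int \<times> int \<Rightarrow> int) \<Rightarrow> bool" where
  "skew_bilinear \<omega> \<longleftrightarrow>
     (\<forall>v v' w. \<omega> (v + v') w = \<omega> v w + \<omega> v' w) \<and>
     (\<forall>v w w'. \<omega> v (w + w') = \<omega> v w + \<omega> v w') \<and>
     (\<forall>v w. \<omega> v w = - \<omega> w v)"

definition nondegenerate :: "(int \<times> int \<Rightarrow> int \<times> int \<Rightarrow> int) \<Rightarrow> bool" where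
  "nondegenerate \<omega> \<longleftrightarrow> (\<forall>v. (\<forall>w. \<omega> v w = 0) \<longrightarrow> v = 0)"

definition primitive :: "int \<times> int \<Rightarrow> bool" where
  "primitive v \<longleftrightarrow> v \<noteq> 0 \<and> \<not> (\<exists>k::int. \<exists>w. k > 1 \<and> v = (k * fst w, k * snd w))"

text \<open>\<omega>(\<cdot>,v) as an element of L^*, in dual-basis coordinates.\<close>
definition omega_dual :: "(int \<times> int \<Rightarrow> int \<times> int \<Rightarrow> int) \<Rightarrow> int \<times> int \<Rightarrow> int \<times> int" where
  "omega_dual \<omega> v = (\<omega> (1,0) v, \<omega> (0,1) v)"

definition Qcyc :: "complex set" where
  "Qcyc = \<Inter>{F. \<rat> \<subseteq> F \<and> {z. \<exists>n::nat. n > 0 \<and> z ^ n = 1} \<subseteq> F \<and>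
      (\<forall>x\<in>F. \<forall>y\<in>F. x + y \<in> F \<and> x * y \<in> F \<and> - x \<in> F \<and> inverse x \<in> F)}"

type_synonym laurent = "(int \<times> int) \<Rightarrow>\<^sub>0 complex"

definition Xm :: "int \<times> int \<Rightarrow> laurent" where
  "Xm m = Poly_Mapping.single m 1"

definition in_QL :: "laurent \<Rightarrow> bool" where
  "in_QL W \<longleftrightarrow> (\<forall>m. Poly_Mapping.lookup W m \<in> Qcyc)"

definition in_ZL :: "laurent \<Rightarrow> bool" where
  "in_ZL W \<longleftrightarrow> (\<forall>m. Poly_Mapping.lookup W m \<in> \<int>)"

text \<open>W = \<mu>_v^*(W') in the fraction field K_L, with
  \<mu>_v^*(X^m) = X^m (1 + X^{\<omega>(\<cdot>,v)})^{-(m,v)}.  Equality in the fraction field is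
  expressed by clearing the denominator (1 + X^{\<omega>(\<cdot>,v)})^N for a sufficiently
  large N.\<close>
definition mutation_eq :: "(int \<times> int \<Rightarrow> int \<times> int \<Rightarrow> int) \<Rightarrow> int \<times> int \<Rightarrow> laurent \<Rightarrow> laurent \<Rightarrow> bool" where
  "mutation_eq \<omega> v W W' \<longleftrightarrow>
    (\<exists>N::nat. (\<forall>m \<in> Poly_Mapping.keys W'. pairing m v \<le> int N) \<and>
       W * (1 + Xm (omega_dual \<omega> v)) ^ N =
       (\<Sum>m \<in> Poly_Mapping.keys W'. Poly_Mapping.single m (Poly_Mapping.lookup W' m) *
            (1 + Xm (omega_dual \<omega> v)) ^ nat (int N - pairing m v)))"

end

theory Submission
  imports Defs
begin


abbreviation lk :: "laurent \<Rightarrow> int \<times> int \<Rightarrow> complex" where "lk \<equiv> Poly_Mapping.lookup"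

lemma lookup_mult_single1:
  fixes f :: laurent
  shows "lk (f * Poly_Mapping.single n 1) m = lk f (m - n)"
proof -
  have inner: "(\<Sum>q. Poly_Mapping.lookup (Poly_Mapping.single n (1::complex)) q when m = l + q) = (1 when l = m - n)" for l
  proof -
    have "(\<Sum>q. Poly_Mapping.lookup (Poly_Mapping.single n (1::complex)) q when m = l + q)
       = (\<Sum>q. ((1 when l = m - n) when q = n))"
      by (rule Sum_any.cong) (auto simp: lookup_single when_def algebra_simps)
    then show ?thesis by simp
  qed
  have "lk (f * Poly_Mapping.single n 1) m = Sum_any (\<lambda>l. lk f l * (1 when l = m - n))"
    unfolding lookup_mult inner ..
  also have "\<dots> = Sum_any (\<lambda>l. lk f l when l = m - n)"
    by (rule Sum_any.cong) (auto simp: when_def)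
  also have "\<dots> = lk f (m - n)" by simp
  finally show ?thesis .
qed

lemma lookup_mult_P:
  fixes f :: laurent
  shows "lk (f * (1 + Xm n)) m = lk f m + lk f (m - n)"
  by (simp add: distrib_left lookup_add Xm_def lookup_mult_single1)


lemma additive_lin:
  fixes f :: "int \<times> int \<Rightarrow> int"
  assumes add: "\<And>v v'. f (v + v') = f v + f v'"
  shows "f (a, b) = a * f (1,0) + b * f (0,1)"
proof -
  have f0: "f (0,0) = 0" using add[of "(0,0)" "(0,0)"] by simp
  have A: "f (i, 0) = i * f (1,0)" for i
  proof (induct i rule: int_induct[where k=0])
    case base then show ?case using f0 by simp
  next
    case (step1 i)
    have "f (i+1, 0) = f (i,0) + f (1,0)" using add[of "(i,0)" "(1,0)"] by simp
    then show ?case using step1 by (simp add: distrib_right)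
  next
    case (step2 i)
    have "f (i, 0) = f (i - 1,0) + f (1,0)" using add[of "(i - 1,0)" "(1,0)"] by simp
    then show ?case using step2 by (simp add: left_diff_distrib)
  qed
  have B: "f (0, i) = i * f (0,1)" for i
  proof (induct i rule: int_induct[where k=0])
    case base then show ?case using f0 by simp
  next
    case (step1 i)
    have "f (0, i+1) = f (0,i) + f (0,1)" using add[of "(0,i)" "(0,1)"] by simp
    then show ?case using step1 by (simp add: distrib_right)
  next
    case (step2 i)
    have "f (0, i) = f (0, i - 1) + f (0,1)" using add[of "(0, i - 1)" "(0,1)"] by simp
    then show ?case using step2 by (simp add: left_diff_distrib)
  qed
  have "f (a, b) = f (a,0) + f (0,b)" using add[of "(a,0)" "(0,b)"] by simp
  then show ?thesis using A[of a] B[of b] by linarith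
qed


definition Rk :: "int \<times> int \<Rightarrow> int \<Rightarrow> laurent \<Rightarrow> laurent" where
  "Rk u k F = Abs_poly_mapping (\<lambda>m. if pairing m u = k then lk F m else 0)"

lemma lookup_Rk: "lk (Rk u k F) m = (if pairing m u = k then lk F m else 0)"
proof -
  have "finite {m. (if pairing m u = k then lk F m else 0) \<noteq> 0}"
    by (rule finite_subset[OF _ finite_keys[of F]]) (auto simp: in_keys_iff)
  then show ?thesis unfolding Rk_def by simp
qed

lemma pairing_diff: "pairing (m - n) u = pairing m u - pairing n u"
  by (simp add: pairing_def algebra_simps)

lemma Rk_mult_P:
  assumes "pairing n u = 0"
  shows "Rk u k (F * (1 + Xm n)) = Rk u k F * (1 + Xm n)"
  by (rule poly_mapping_eqI) (simp add: lookup_Rk lookup_mult_P pairing_diff assms)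

lemma Rk_mult_Pow:
  assumes "pairing n u = 0"
  shows "Rk u k (F * (1 + Xm n) ^ e) = Rk u k F * (1 + Xm n) ^ e"
proof (induct e arbitrary: F)
  case 0 then show ?case by simp
next
  case (Suc e)
  have "Rk u k (F * (1 + Xm n) ^ Suc e) = Rk u k ((F * (1 + Xm n)) * (1 + Xm n) ^ e)"
    by (simp add: mult.assoc)
  also have "\<dots> = Rk u k (F * (1 + Xm n)) * (1 + Xm n) ^ e" by (rule Suc)
  also have "\<dots> = Rk u k F * (1 + Xm n) ^ Suc e"
    by (simp add: Rk_mult_P[OF assms] mult.assoc)
  finally show ?case .
qed

lemma Rk_single: "Rk u k (Poly_Mapping.single m c) = (if pairing m u = k then Poly_Mapping.single m c else 0)"
  by (rule poly_mapping_eqI) (auto simp: lookup_Rk lookup_single when_def)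

lemma Rk_sum: "Rk u k (sum f A) = (\<Sum>x\<in>A. Rk u k (f x))"
  by (rule poly_mapping_eqI) (simp add: lookup_Rk lookup_sum)

lemma sum_single_keys: "(\<Sum>x\<in>Poly_Mapping.keys F. Poly_Mapping.single x (lk F x)) = F"
proof (rule poly_mapping_eqI)
  fix m
  have "lk (\<Sum>x\<in>Poly_Mapping.keys F. Poly_Mapping.single x (lk F x)) m
      = (\<Sum>x\<in>Poly_Mapping.keys F. (lk F x when x = m))"
    by (simp add: lookup_sum lookup_single)
  also have "\<dots> = lk F m"
    by (cases "m \<in> Poly_Mapping.keys F") (simp_all add: when_def in_keys_iff)
  finally show "lk (\<Sum>x\<in>Poly_Mapping.keys F. Poly_Mapping.single x (lk F x)) m = lk F m" .
qed

lemma ZL_mult_P: "in_ZL F \<Longrightarrow> in_ZL (F * (1 + Xm n))"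
  unfolding in_ZL_def lookup_mult_P by (blast intro: Ints_add)

lemma ZL_mult_Pow: "in_ZL F \<Longrightarrow> in_ZL (F * (1 + Xm n) ^ e)"
proof (induct e arbitrary: F)
  case 0 then show ?case by simp
next
  case (Suc e)
  then show ?case using Suc(1)[OF ZL_mult_P[OF Suc(2)]] by (simp add: mult.assoc)
qed

lemma ZL_div_P:
  assumes n: "n \<noteq> 0" and Z: "in_ZL (F * (1 + Xm n))"
  shows "in_ZL F"
proof -
  define sh where "sh m K = m - (int K * fst n, int K * snd n)" for m and K :: nat
  have step: "\<forall>m. lk F (sh m K) = 0 \<longrightarrow> lk F m \<in> \<int>" for K
  proof (induct K)
    case 0 then show ?case by (simp add: sh_def)
  next
    case (Suc K)
    show ?case
    proof (intro allI impI)
      fix m assume h: "lk F (sh m (Suc K)) = 0"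
      have "sh (m - n) K = sh m (Suc K)" by (simp add: sh_def algebra_simps prod_eq_iff)
      then have "lk F (m - n) \<in> \<int>" using Suc h by metis
      moreover have "lk F m + lk F (m - n) \<in> \<int>" using Z unfolding in_ZL_def lookup_mult_P by blast
      ultimately have "lk F m + lk F (m - n) - lk F (m - n) \<in> \<int>" by (blast intro: Ints_diff)
      then show "lk F m \<in> \<int>" by simp
    qed
  qed
  show ?thesis unfolding in_ZL_def
  proof
    fix m
    have inj: "inj (sh m)"
    proof (rule injI)
      fix a b assume "sh m a = sh m b"
      then have "int a * fst n = int b * fst n" "int a * snd n = int b * snd n"
        by (simp_all add: sh_def prod_eq_iff)
      then show "a = b" using n by (cases n) (auto simp: zero_prod_def)
    qed
    have "infinite (range (sh m))" using inj by (simp add: finite_image_iff)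
    then obtain K where "sh m K \<notin> Poly_Mapping.keys F"
      using finite_keys[of F] by (metis finite_subset rangeE subsetI)
    then show "lk F m \<in> \<int>" using step[of K] by (metis in_keys_iff)
  qed
qed

lemma ZL_div_Pow:
  assumes n: "n \<noteq> 0" shows "in_ZL (F * (1 + Xm n) ^ e) \<Longrightarrow> in_ZL F"
proof (induct e arbitrary: F)
  case 0 then show ?case by simp
next
  case (Suc e)
  have "in_ZL ((F * (1 + Xm n)) * (1 + Xm n) ^ e)" using Suc(2) by (simp add: mult.assoc)
  then show ?case using Suc(1) ZL_div_P[OF n] by blast
qed

lemma ZL_diff: "in_ZL a \<Longrightarrow> in_ZL b \<Longrightarrow> in_ZL (a - b)"
  by (simp add: in_ZL_def lookup_minus)
lemma ZL_add: "in_ZL a \<Longrightarrow> in_ZL b \<Longrightarrow> in_ZL (a + b)"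
  by (simp add: in_ZL_def lookup_add)
lemma ZL_0: "in_ZL 0" by (simp add: in_ZL_def)

lemma key1:
  assumes n: "n \<noteq> 0" and eq: "a * (1 + Xm n) ^ N = b * (1 + Xm n) ^ M" and le: "M \<le> N"
  shows "in_ZL a \<longleftrightarrow> in_ZL b"
proof -
  let ?P = "1 + Xm n"
  have "(a * ?P ^ (N - M) - b) * ?P ^ M = 0"
    using eq le by (simp add: algebra_simps power_add[symmetric])
  then have c: "in_ZL (a * ?P ^ (N - M) - b)" using ZL_div_Pow[OF n] ZL_0 by metis
  show ?thesis
  proof
    assume "in_ZL a"
    then have "in_ZL (a * ?P ^ (N - M) - (a * ?P ^ (N - M) - b))" using c ZL_mult_Pow ZL_diff by blast
    then show "in_ZL b" by simp
  next
    assume "in_ZL b"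
    then have "in_ZL ((a * ?P ^ (N - M) - b) + b)" using c ZL_add by blast
    then show "in_ZL a" using ZL_div_Pow[OF n] by simp
  qed
qed

lemma key:
  assumes n: "n \<noteq> 0" and eq: "a * (1 + Xm n) ^ N = b * (1 + Xm n) ^ M"
  shows "in_ZL a \<longleftrightarrow> in_ZL b"
  using key1[OF n eq] key1[OF n eq[symmetric]] by (cases "M \<le> N") auto



lemma ZL_Rk_iff: "in_ZL F \<longleftrightarrow> (\<forall>k. in_ZL (Rk u k F))"
proof
  assume "in_ZL F" then show "\<forall>k. in_ZL (Rk u k F)" by (simp add: in_ZL_def lookup_Rk)
next
  assume h: "\<forall>k. in_ZL (Rk u k F)"
  show "in_ZL F" unfolding in_ZL_def
  proof
    fix m
    have "lk (Rk u (pairing m u) F) m \<in> \<int>" using h unfolding in_ZL_def by blast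
    then show "lk F m \<in> \<int>" by (simp add: lookup_Rk)
  qed
qed

theorem mainTheorem11:
  fixes \<omega> :: "int \<times> int \<Rightarrow> int \<times> int \<Rightarrow> int"
    and u :: "int \<times> int" and W W' :: laurent
  assumes "skew_bilinear \<omega>" and "nondegenerate \<omega>"
    and "primitive u"
    and "in_QL W" and "in_QL W'"
    and "mutation_eq \<omega> u W W'"
  shows "in_ZL W \<longleftrightarrow> in_ZL W'"
proof -
  define n where "n = omega_dual \<omega> u"
  define P where "P = 1 + Xm n"
  have addw: "\<omega> (v + v') w = \<omega> v w + \<omega> v' w" for v v' w using assms(1) unfolding skew_bilinear_def by blast
  have skew: "\<omega> v w = - \<omega> w v" for v w using assms(1) unfolding skew_bilinear_def by blast
  have lin: "\<omega> (a, b) w = a * \<omega> (1,0) w + b * \<omega> (0,1) w" for a b w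
    by (rule additive_lin[where f = "\<lambda>v. \<omega> v w"]) (rule addw)
  have d0: "pairing n u = 0"
  proof -
    have "pairing n u = \<omega> (fst u, snd u) u" using lin[of "fst u" "snd u" u]
      by (simp add: n_def omega_dual_def pairing_def mult.commute)
    also have "\<dots> = \<omega> u u" by simp
    finally show ?thesis using skew[of u u] by simp
  qed
  have u0: "u \<noteq> 0" using assms(3) by (simp add: primitive_def)
  have n0: "n \<noteq> 0"
  proof
    assume "n = 0"
    then have z: "\<omega> (1,0) u = 0" "\<omega> (0,1) u = 0" by (simp_all add: n_def omega_dual_def zero_prod_def)
    have "\<omega> u w = 0" for w
    proof -
      have "\<omega> w u = 0" using lin[of "fst w" "snd w" u] z by simp
      then show ?thesis using skew[of u w] by simp
    qed
    then have "u = 0" using assms(2) unfolding nondegenerate_def by blast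
    then show False using u0 by simp
  qed
  obtain N where eq: "W * P ^ N =
       (\<Sum>m \<in> Poly_Mapping.keys W'. Poly_Mapping.single m (lk W' m) * P ^ nat (int N - pairing m u))"
    using assms(6) unfolding mutation_eq_def P_def n_def by blast
  have keq: "Rk u k W * P ^ N = Rk u k W' * P ^ nat (int N - k)" for k
  proof -
    have "Rk u k W * P ^ N = Rk u k (W * P ^ N)" unfolding P_def by (rule Rk_mult_Pow[OF d0, symmetric])
    also have "\<dots> = (\<Sum>m \<in> Poly_Mapping.keys W'. Rk u k (Poly_Mapping.single m (lk W' m)) * P ^ nat (int N - pairing m u))"
      unfolding eq Rk_sum by (simp only: P_def Rk_mult_Pow[OF d0])
    also have "\<dots> = (\<Sum>m \<in> Poly_Mapping.keys W'. Rk u k (Poly_Mapping.single m (lk W' m)) * P ^ nat (int N - k))"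
      by (rule sum.cong) (auto simp: Rk_single)
    also have "\<dots> = Rk u k (\<Sum>m \<in> Poly_Mapping.keys W'. Poly_Mapping.single m (lk W' m)) * P ^ nat (int N - k)"
      by (simp add: Rk_sum sum_distrib_right)
    also have "\<dots> = Rk u k W' * P ^ nat (int N - k)" by (simp add: sum_single_keys)
    finally show ?thesis .
  qed
  have "in_ZL (Rk u k W) \<longleftrightarrow> in_ZL (Rk u k W')" for k
    using key[OF n0 keq[of k, unfolded P_def]] .
  then show ?thesis using ZL_Rk_iff[of W u] ZL_Rk_iff[of W' u] by simp
qed

end
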